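(* Let $\Theta$ be a bunch in a projected cone $(E \xrightarrow{Q} K, \gamma)$. Then for any two faces $\gamma_1, \gamma_2 \in \mathrm{cov}(\Theta)$ we have $Q(\gamma_1)^{\circ} \cap Q(\gamma_2)^{\circ} \neq \emptyset$.
   Context: A lattice is a finitely generated free abelian group; for a lattice $E$ put $E_{\mathbb Q} := \mathbb Q \otimes_{\mathbb Z} E$, and a lattice homomorphism is extended $\mathbb Q$-linearly. A cone in $E$ means a convex polyhedral (not necessarily strictly convex) cone in $E_{\mathbb Q}$; $\tau^{\circ}$ denotes the relative interior of a cone $\tau$, $\gamma_0 \preceq \gamma$ means $\gamma_0$ is a face of $\gamma$, and $\mathrm{lin}(\tau)$ is the linear span. A projected cone $(E \xrightarrow{Q} K, \gamma)$ consists of a surjective homomorphism of lattices $Q\colon E \to K$ and a simplicial cone $\gamma \subset E_{\mathbb Q}$ of full dimension. A projected face is a cone $Q(\gamma_0) \subset K_{\mathbb Q}$ with $\gamma_0 \preceq \gamma$. A bunch in $(E \xrightarrow{Q} K,\gamma)$ is a nonempty collection $\Theta$ of projected faces such that a projected face $\tau_0$ belongs to $\Theta$ if and only if $\emptyset \neq \tau_0^{\circ} \cap \tau^{\circ} \neq \tau^{\circ}$ holds for all $\tau \in \Theta$ with $\tau \neq \tau_0$. The covering collection $\mathrm{cov}(\Theta)$ is the set of faces $\gamma_0 \preceq \gamma$ which are minimal (among faces of $\gamma$, with respect to inclusion) with the property that $Q(\gamma_0) \supseteq \tau$ for some $\tau \in \Theta$. *)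

theory Defs
  imports Complex_Main
begin

text \<open>A lattice of rank n is identified with Z^n (via a chosen basis),
so its rational span is Q^n. Vectors of Q^n are modelled as functions nat => rat
vanishing at all coordinates >= n. A lattice homomorphism Z^n -> Z^m is an integer
m x n matrix, extended Q-linearly.\<close>

type_synonym qvec = "nat \<Rightarrow> rat"

definition inV :: "nat \<Rightarrow> qvec \<Rightarrow> bool" where
  "inV n x \<longleftrightarrow> (\<forall>i\<ge>n. x i = 0)"

definition lattice_vec :: "nat \<Rightarrow> qvec \<Rightarrow> bool" where
  "lattice_vec n x \<longleftrightarrow> inV n x \<and> (\<forall>i. x i \<in> \<int>)"

definition lincomb :: "(qvec \<Rightarrow> rat) \<Rightarrow> qvec set \<Rightarrow> qvec" where
  "lincomb c F = (\<lambda>i. \<Sum>s\<in>F. c s * s i)"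

definition cone_gen :: "qvec set \<Rightarrow> qvec set" where
  "cone_gen S = {lincomb c F | c F. finite F \<and> F \<subseteq> S \<and> (\<forall>s\<in>F. 0 \<le> c s)}"

definition lin_span :: "qvec set \<Rightarrow> qvec set" where
  "lin_span S = {lincomb c F | c F. finite F \<and> F \<subseteq> S}"

definition lin_indep :: "qvec set \<Rightarrow> bool" where
  "lin_indep S \<longleftrightarrow> (\<forall>F c. finite F \<longrightarrow> F \<subseteq> S \<longrightarrow> lincomb c F = (\<lambda>_. 0) \<longrightarrow> (\<forall>s\<in>F. c s = 0))"

definition simplicial_full_cone :: "nat \<Rightarrow> qvec set \<Rightarrow> bool" where
  "simplicial_full_cone n \<gamma> \<longleftrightarrow>
     (\<exists>S. finite S \<and> card S = n \<and> (\<forall>s\<in>S. inV n s) \<and> lin_indep S \<and> \<gamma> = cone_gen S)"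

definition dotp :: "nat \<Rightarrow> qvec \<Rightarrow> qvec \<Rightarrow> rat" where
  "dotp n u x = (\<Sum>i<n. u i * x i)"

definition is_face :: "nat \<Rightarrow> qvec set \<Rightarrow> qvec set \<Rightarrow> bool" where
  "is_face n \<sigma>0 \<sigma> \<longleftrightarrow>
     (\<exists>u. inV n u \<and> (\<forall>x\<in>\<sigma>. 0 \<le> dotp n u x) \<and> \<sigma>0 = {x\<in>\<sigma>. dotp n u x = 0})"

text \<open>Relative interior: points of tau having a (sup-norm) neighbourhood, relative to
the linear span (= affine hull, as cones contain 0) of tau, that lies in tau.\<close>
definition relint :: "qvec set \<Rightarrow> qvec set" where
  "relint \<tau> = {x\<in>\<tau>. \<exists>\<epsilon>>0. \<forall>y\<in>lin_span \<tau>. (\<forall>i. \<bar>y i - x i\<bar> < \<epsilon>) \<longrightarrow> y \<in> \<tau>}"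

definition qmap :: "nat \<Rightarrow> nat \<Rightarrow> (nat \<Rightarrow> nat \<Rightarrow> int) \<Rightarrow> qvec \<Rightarrow> qvec" where
  "qmap m n Q x = (\<lambda>i. if i < m then \<Sum>j<n. of_int (Q i j) * x j else 0)"

definition projected_cone :: "nat \<Rightarrow> nat \<Rightarrow> (nat \<Rightarrow> nat \<Rightarrow> int) \<Rightarrow> qvec set \<Rightarrow> bool" where
  "projected_cone m n Q \<gamma> \<longleftrightarrow>
     (\<forall>z. lattice_vec m z \<longrightarrow> (\<exists>x. lattice_vec n x \<and> qmap m n Q x = z))
     \<and> simplicial_full_cone n \<gamma>"

definition proj_face :: "nat \<Rightarrow> nat \<Rightarrow> (nat \<Rightarrow> nat \<Rightarrow> int) \<Rightarrow> qvec set \<Rightarrow> qvec set \<Rightarrow> bool" where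
  "proj_face m n Q \<gamma> \<tau> \<longleftrightarrow> (\<exists>\<gamma>0. is_face n \<gamma>0 \<gamma> \<and> \<tau> = qmap m n Q ` \<gamma>0)"

definition is_bunch :: "nat \<Rightarrow> nat \<Rightarrow> (nat \<Rightarrow> nat \<Rightarrow> int) \<Rightarrow> qvec set \<Rightarrow> qvec set set \<Rightarrow> bool" where
  "is_bunch m n Q \<gamma> \<Theta> \<longleftrightarrow>
     \<Theta> \<noteq> {} \<and> (\<forall>\<tau>\<in>\<Theta>. proj_face m n Q \<gamma> \<tau>) \<and>
     (\<forall>\<tau>0. proj_face m n Q \<gamma> \<tau>0 \<longrightarrow>
        (\<tau>0 \<in> \<Theta> \<longleftrightarrow>
          (\<forall>\<tau>\<in>\<Theta>. \<tau> \<noteq> \<tau>0 \<longrightarrow> relint \<tau>0 \<inter> relint \<tau> \<noteq> {} \<and> relint \<tau>0 \<inter> relint \<tau> \<noteq> relint \<tau>)))"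

definition cov :: "nat \<Rightarrow> nat \<Rightarrow> (nat \<Rightarrow> nat \<Rightarrow> int) \<Rightarrow> qvec set \<Rightarrow> qvec set set \<Rightarrow> qvec set set" where
  "cov m n Q \<gamma> \<Theta> =
     {\<gamma>0. is_face n \<gamma>0 \<gamma> \<and> (\<exists>\<tau>\<in>\<Theta>. \<tau> \<subseteq> qmap m n Q ` \<gamma>0) \<and>
        (\<forall>\<gamma>1. is_face n \<gamma>1 \<gamma> \<longrightarrow> \<gamma>1 \<subset> \<gamma>0 \<longrightarrow> \<not> (\<exists>\<tau>\<in>\<Theta>. \<tau> \<subseteq> qmap m n Q ` \<gamma>1))}"

end

theory Submission
  imports Defs
begin

definition lcf :: "('a \<Rightarrow> rat) \<Rightarrow> 'a set \<Rightarrow> ('a \<Rightarrow> qvec) \<Rightarrow> qvec" where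
  "lcf c T f = (\<lambda>i. \<Sum>t\<in>T. c t * f t i)"

definition CF :: "'a set \<Rightarrow> ('a \<Rightarrow> qvec) \<Rightarrow> qvec set" where
  "CF T f = {lcf c T f | c. \<forall>t\<in>T. 0 \<le> c t}"

definition SP :: "'a set \<Rightarrow> ('a \<Rightarrow> qvec) \<Rightarrow> qvec set" where
  "SP T f = {lcf c T f | c. True}"

definition nrm :: "nat \<Rightarrow> qvec \<Rightarrow> rat" where
  "nrm m z = (\<Sum>i<m. \<bar>z i\<bar>)"

lemma lincomb_lcf: "lincomb c F = lcf c F id"
  by (simp add: lincomb_def lcf_def)

lemma lcf_cong: "(\<And>t. t \<in> T \<Longrightarrow> c t = d t) \<Longrightarrow> lcf c T f = lcf d T f"
  by (auto simp: lcf_def intro!: sum.cong)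

lemma lcf_ext0:
  assumes "finite T" "T' \<subseteq> T" "\<And>t. t \<in> T - T' \<Longrightarrow> c t = 0"
  shows "lcf c T f = lcf c T' f"
  unfolding lcf_def
  apply (rule ext)
  apply (rule sum.mono_neutral_right) using assms by auto

lemma lcf_extend:
  assumes "finite T" "T' \<subseteq> T"
  shows "lcf (\<lambda>s. if s \<in> T' then c s else 0) T f = lcf c T' f"
proof -
  have "lcf (\<lambda>s. if s \<in> T' then c s else 0) T f = lcf (\<lambda>s. if s \<in> T' then c s else 0) T' f"
    using assms by (intro lcf_ext0) auto
  also have "\<dots> = lcf c T' f" by (rule lcf_cong) simp
  finally show ?thesis .
qed

lemma lcf_empty: "lcf c {} f = (\<lambda>i. 0)" by (simp add: lcf_def)

lemma lcf_insert: "finite T \<Longrightarrow> v \<notin> T \<Longrightarrow> lcf c (insert v T) f = (\<lambda>i. c v * f v i + lcf c T f i)"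
  by (simp add: lcf_def)

lemma lcf_add: "lcf (\<lambda>t. c t + d t) T f = (\<lambda>i. lcf c T f i + lcf d T f i)"
  by (simp add: lcf_def distrib_right sum.distrib)

lemma lcf_scale: "lcf (\<lambda>t. a * c t) T f = (\<lambda>i. a * lcf c T f i)"
  by (simp add: lcf_def sum_distrib_left mult.assoc)

lemma lcf_diff: "lcf (\<lambda>t. c t - d t) T f = (\<lambda>i. lcf c T f i - lcf d T f i)"
  by (simp add: lcf_def left_diff_distrib sum_subtractf)

lemma lcf_sum: "lcf (\<lambda>s. \<Sum>t\<in>U. C t s) T f i = (\<Sum>t\<in>U. lcf (C t) T f i)"
  by (simp add: lcf_def sum_distrib_right sum.swap[of _ T])

lemma dotp_lcf: "dotp k a (lcf c T f) = (\<Sum>t\<in>T. c t * dotp k a (f t))"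
  unfolding dotp_def lcf_def
  by (simp add: sum_distrib_left sum.swap[of _ T] mult.left_commute)

lemma dotp_lin: "dotp k (\<lambda>j. a j - r * b j) x = dotp k a x - r * dotp k b x"
  by (simp add: dotp_def left_diff_distrib sum_subtractf sum_distrib_left mult.assoc)

lemma dotp_lin2: "dotp k a (\<lambda>j. x j - r * y j) = dotp k a x - r * dotp k a y"
  by (simp add: dotp_def right_diff_distrib sum_subtractf sum_distrib_left mult.left_commute)

lemma gen_in_lcf: assumes "finite T" "t \<in> T" shows "lcf (\<lambda>s. if s = t then 1 else 0) T f = f t"
proof (rule ext)
  fix i
  have "lcf (\<lambda>s. if s = t then 1 else 0) T f i = (\<Sum>s\<in>T. if s = t then f s i else 0)"
    unfolding lcf_def by (rule sum.cong) auto
  also have "\<dots> = f t i" using assms by simp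
  finally show "lcf (\<lambda>s. if s = t then 1 else 0) T f i = f t i" .
qed

lemma gen_in: "finite T \<Longrightarrow> t \<in> T \<Longrightarrow> f t \<in> CF T f"
  unfolding CF_def using gen_in_lcf[of T t f] by (auto intro!: exI[of _ "\<lambda>s. if s = t then 1 else 0"])

lemma CF_mono: assumes "finite T" "T' \<subseteq> T" shows "CF T' f \<subseteq> CF T f"
proof
  fix x assume "x \<in> CF T' f"
  then obtain c where c: "x = lcf c T' f" "\<forall>t\<in>T'. 0 \<le> c t" by (auto simp: CF_def)
  then show "x \<in> CF T f" using lcf_extend[OF assms, of c f] unfolding CF_def
    by (auto intro!: exI[of _ "\<lambda>s. if s \<in> T' then c s else 0"])
qed

lemma SP_mono: assumes "finite T" "T' \<subseteq> T" shows "SP T' f \<subseteq> SP T f"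
proof
  fix x assume "x \<in> SP T' f"
  then obtain c where c: "x = lcf c T' f" by (auto simp: SP_def)
  then show "x \<in> SP T f" using lcf_extend[OF assms, of c f] unfolding SP_def
    by (auto intro!: exI[of _ "\<lambda>s. if s \<in> T' then c s else 0"])
qed

lemma cone_gen_CF: assumes "finite S" shows "cone_gen S = CF S id"
proof
  show "cone_gen S \<subseteq> CF S id"
  proof
    fix x assume "x \<in> cone_gen S"
    then obtain c F where x: "x = lincomb c F" "finite F" "F \<subseteq> S" "\<forall>s\<in>F. 0 \<le> c s"
      unfolding cone_gen_def by blast
    then have "x \<in> CF F id" by (auto simp: CF_def lincomb_lcf)
    then show "x \<in> CF S id" using CF_mono[OF assms x(3)] by blast
  qed
  show "CF S id \<subseteq> cone_gen S"
  proof
    fix x assume "x \<in> CF S id"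
    then obtain c where "x = lcf c S id" "\<forall>t\<in>S. 0 \<le> c t" unfolding CF_def by blast
    then show "x \<in> cone_gen S" unfolding cone_gen_def lincomb_lcf using assms by blast
  qed
qed

lemma qmap_lcf: "qmap m n Q (lcf c T id) = lcf c T (qmap m n Q)"
  unfolding qmap_def lcf_def
  by (rule ext) (auto simp: sum_distrib_left sum.swap[of _ T] mult.left_commute)

lemma qmap_CF: "qmap m n Q ` CF T id = CF T (qmap m n Q)"
  unfolding CF_def by (force simp: qmap_lcf image_iff)

lemma inV_lcf: "\<forall>t\<in>T. inV m (f t) \<Longrightarrow> inV m (lcf c T f)"
  by (simp add: inV_def lcf_def)

lemma inV_qmap: "inV m (qmap m n Q x)"
  by (simp add: inV_def qmap_def)

lemma nrm_nonneg: "0 \<le> nrm m z" by (simp add: nrm_def sum_nonneg)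

lemma le_nrm: "i < m \<Longrightarrow> \<bar>z i\<bar> \<le> nrm m z"
  unfolding nrm_def by (rule member_le_sum) auto

lemma dot_bound: "\<bar>dotp m a z\<bar> \<le> nrm m a * nrm m z"
proof -
  have "\<bar>dotp m a z\<bar> \<le> (\<Sum>i<m. \<bar>a i\<bar> * \<bar>z i\<bar>)"
    unfolding dotp_def using sum_abs[of "\<lambda>i. a i * z i" "{..<m}"] by (simp add: abs_mult)
  also have "\<dots> \<le> (\<Sum>i<m. \<bar>a i\<bar> * nrm m z)"
    by (intro sum_mono mult_left_mono le_nrm) auto
  also have "\<dots> = nrm m a * nrm m z" by (simp add: nrm_def sum_distrib_right)
  finally show ?thesis .
qed

lemma nrm_diff: "nrm m (\<lambda>i. z i - r * y i) \<le> nrm m z + \<bar>r\<bar> * nrm m y"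
proof -
  have "nrm m (\<lambda>i. z i - r * y i) \<le> (\<Sum>i<m. \<bar>z i\<bar> + \<bar>r\<bar> * \<bar>y i\<bar>)"
    unfolding nrm_def
  proof (rule sum_mono)
    fix i
    show "\<bar>z i - r * y i\<bar> \<le> \<bar>z i\<bar> + \<bar>r\<bar> * \<bar>y i\<bar>"
      using abs_triangle_ineq4[of "z i" "r * y i"] by (simp add: abs_mult)
  qed
  also have "\<dots> = nrm m z + \<bar>r\<bar> * nrm m y" by (simp add: nrm_def sum.distrib sum_distrib_left)
  finally show ?thesis .
qed


lemma sep:
  assumes "finite T"
  shows "\<forall>w. inV m w \<longrightarrow> (\<forall>t\<in>T. inV m (f t)) \<longrightarrow> w \<notin> SP T f \<longrightarrow>
    (\<exists>a. (\<forall>t\<in>T. dotp m a (f t) = 0) \<and> dotp m a w = 1)"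
  using assms
proof (induction T rule: finite_induct)
  case empty
  show ?case
  proof (intro allI impI)
    fix w assume w: "inV m w" "\<forall>t\<in>{}. inV m (f t)" "w \<notin> SP {} f"
    have "w \<noteq> (\<lambda>i. 0)" using w(3) by (auto simp: SP_def lcf_empty)
    then obtain i where i: "w i \<noteq> 0" by auto
    with w(1) have im: "i < m" by (meson inV_def not_less)
    define a where "a = (\<lambda>j. if j = i then 1 / w i else (0::rat))"
    have "dotp m a w = (\<Sum>j<m. if j = i then 1 else 0)"
      unfolding dotp_def a_def using i by (intro sum.cong) auto
    also have "\<dots> = 1" using im by simp
    finally show "\<exists>a. (\<forall>t\<in>{}. dotp m a (f t) = 0) \<and> dotp m a w = 1" by auto
  qed
next
  case (insert v T)
  show ?case
  proof (intro allI impI)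
    fix w assume w: "inV m w" "\<forall>t\<in>insert v T. inV m (f t)" "w \<notin> SP (insert v T) f"
    have fT: "\<forall>t\<in>T. inV m (f t)" and fv: "inV m (f v)" using w(2) by auto
    have SPsub: "SP T f \<subseteq> SP (insert v T) f" using SP_mono[of "insert v T" T f] insert.hyps(1) by auto
    show "\<exists>a. (\<forall>t\<in>insert v T. dotp m a (f t) = 0) \<and> dotp m a w = 1"
    proof (cases "f v \<in> SP T f")
      case True
      then obtain e where e: "f v = lcf e T f" by (auto simp: SP_def)
      have "w \<notin> SP T f" using w(3) SPsub by auto
      then obtain a where a: "\<forall>t\<in>T. dotp m a (f t) = 0" "dotp m a w = 1"
        using insert.IH w(1) fT by blast
      have "dotp m a (f v) = 0" by (simp add: e dotp_lcf a(1))
      then show ?thesis using a by auto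
    next
      case False
      then obtain av where av: "\<forall>t\<in>T. dotp m av (f t) = 0" "dotp m av (f v) = 1"
        using insert.IH fv fT by blast
      define w' where "w' = (\<lambda>i. w i - dotp m av w * f v i)"
      have "w' \<notin> SP T f"
      proof
        assume "w' \<in> SP T f"
        then obtain e where e: "w' = lcf e T f" by (auto simp: SP_def)
        have "lcf (e(v := dotp m av w)) T f = lcf e T f"
          using insert.hyps(2) by (intro lcf_cong) auto
        then have "w = lcf (e(v := dotp m av w)) (insert v T) f"
          using insert.hyps e by (auto simp: lcf_insert w'_def fun_eq_iff algebra_simps)
        then show False using w(3) by (auto simp: SP_def)
      qed
      moreover have "inV m w'" using w(1) fv by (simp add: inV_def w'_def)
      ultimately obtain a' where a': "\<forall>t\<in>T. dotp m a' (f t) = 0" "dotp m a' w' = 1"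
        using insert.IH fT by blast
      define a where "a = (\<lambda>j. a' j - dotp m a' (f v) * av j)"
      have "\<forall>t\<in>insert v T. dotp m a (f t) = 0" using a' av by (auto simp: a_def dotp_lin)
      moreover have "dotp m a w = 1"
      proof -
        have "dotp m a' w' = dotp m a' w - dotp m av w * dotp m a' (f v)"
          unfolding w'_def by (rule dotp_lin2)
        moreover have "dotp m a w = dotp m a' w - dotp m a' (f v) * dotp m av w"
          unfolding a_def by (rule dotp_lin)
        moreover have "dotp m a' (f v) * dotp m av w = dotp m av w * dotp m a' (f v)"
          by (rule mult.commute)
        ultimately show ?thesis using a'(2) by linarith
      qed
      ultimately show ?thesis by blast
    qed
  qed
qed

lemma bnd:
  assumes "finite T" "\<forall>t\<in>T. inV m (f t)"
  shows "\<exists>K\<ge>0. \<forall>z\<in>SP T f. \<exists>d. z = lcf d T f \<and> (\<forall>t\<in>T. \<bar>d t\<bar> \<le> K * nrm m z)"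
  using assms
proof (induction T rule: finite_induct)
  case empty
  show ?case
  proof (intro exI[of _ 0] conjI ballI)
    fix z assume "z \<in> SP {} f"
    then show "\<exists>d. z = lcf d {} f \<and> (\<forall>t\<in>{}. \<bar>d t\<bar> \<le> 0 * nrm m z)" by (auto simp: SP_def)
  qed simp
next
  case (insert v T)
  have fT: "\<forall>t\<in>T. inV m (f t)" and fv: "inV m (f v)" using insert.prems by auto
  obtain K where K: "K \<ge> 0" "\<forall>z\<in>SP T f. \<exists>d. z = lcf d T f \<and> (\<forall>t\<in>T. \<bar>d t\<bar> \<le> K * nrm m z)"
    using insert.IH fT by blast
  show ?case
  proof (cases "f v \<in> SP T f")
    case True
    then obtain e where e: "f v = lcf e T f" by (auto simp: SP_def)
    have "\<exists>d. z = lcf d (insert v T) f \<and> (\<forall>t\<in>insert v T. \<bar>d t\<bar> \<le> K * nrm m z)"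
      if z: "z \<in> SP (insert v T) f" for z
    proof -
      obtain c where c: "z = lcf c (insert v T) f" using z by (auto simp: SP_def)
      have "z = lcf (\<lambda>t. c t + c v * e t) T f"
        using c insert.hyps by (simp add: lcf_insert lcf_add lcf_scale e algebra_simps)
      then have "z \<in> SP T f" by (auto simp: SP_def)
      then obtain d where d: "z = lcf d T f" "\<forall>t\<in>T. \<bar>d t\<bar> \<le> K * nrm m z" using K by blast
      have "lcf (d(v := 0)) T f = lcf d T f" using insert.hyps(2) by (intro lcf_cong) auto
      then have "z = lcf (d(v := 0)) (insert v T) f"
        using d insert.hyps by (simp add: lcf_insert)
      moreover have "\<forall>t\<in>insert v T. \<bar>(d(v:=0)) t\<bar> \<le> K * nrm m z"
        using d(2) K(1) nrm_nonneg[of m z] insert.hyps by auto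
      ultimately show ?thesis by blast
    qed
    then show ?thesis using K(1) by blast
  next
    case False
    obtain a where a: "\<forall>t\<in>T. dotp m a (f t) = 0" "dotp m a (f v) = 1"
      using sep[OF insert.hyps(1)] fv fT False by blast
    define A where "A = nrm m a"
    define N where "N = nrm m (f v)"
    have A0: "A \<ge> 0" and N0: "N \<ge> 0" by (auto simp: A_def N_def nrm_nonneg)
    define K' where "K' = A + K * (1 + A * N)"
    have K'0: "K' \<ge> 0" using A0 N0 K(1) by (simp add: K'_def)
    have "\<exists>d. z = lcf d (insert v T) f \<and> (\<forall>t\<in>insert v T. \<bar>d t\<bar> \<le> K' * nrm m z)"
      if z: "z \<in> SP (insert v T) f" for z
    proof -
      obtain c where c: "z = lcf c (insert v T) f" using z by (auto simp: SP_def)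
      define al where "al = dotp m a z"
      have al: "al = c v" using a insert.hyps by (simp add: al_def c dotp_lcf)
      define z' where "z' = (\<lambda>i. z i - al * f v i)"
      have "z' = lcf c T f" using c al insert.hyps by (auto simp: z'_def lcf_insert)
      then have "z' \<in> SP T f" by (auto simp: SP_def)
      then obtain d where d: "z' = lcf d T f" "\<forall>t\<in>T. \<bar>d t\<bar> \<le> K * nrm m z'" using K by blast
      have "lcf (d(v := al)) T f = lcf d T f" using insert.hyps(2) by (intro lcf_cong) auto
      then have zd: "z = lcf (d(v := al)) (insert v T) f"
        using d insert.hyps by (auto simp: lcf_insert z'_def fun_eq_iff algebra_simps)
      have alb: "\<bar>al\<bar> \<le> A * nrm m z" unfolding al_def A_def by (rule dot_bound)
      have "nrm m z' \<le> nrm m z + \<bar>al\<bar> * N" unfolding z'_def N_def by (rule nrm_diff)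
      also have "\<dots> \<le> nrm m z + A * nrm m z * N" using alb N0 by (simp add: mult_right_mono)
      finally have nz': "nrm m z' \<le> (1 + A * N) * nrm m z" by (simp add: algebra_simps)
      have P: "0 \<le> A * nrm m z" "0 \<le> K * ((1 + A * N) * nrm m z)"
        using A0 N0 K(1) nrm_nonneg[of m z] by auto
      have "\<forall>t\<in>insert v T. \<bar>(d(v := al)) t\<bar> \<le> K' * nrm m z"
      proof
        fix t assume t: "t \<in> insert v T"
        show "\<bar>(d(v := al)) t\<bar> \<le> K' * nrm m z"
        proof (cases "t = v")
          case True
          then show ?thesis using alb P by (simp add: K'_def algebra_simps)
        next
          case False
          then have tT: "t \<in> T" using t by auto
          have "\<bar>d t\<bar> \<le> K * nrm m z'" using d(2) tT by auto
          also have "\<dots> \<le> K * ((1 + A * N) * nrm m z)" using nz' K(1) by (rule mult_left_mono)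
          also have "\<dots> \<le> K' * nrm m z" using P by (simp add: K'_def algebra_simps)
          finally show ?thesis using False by simp
        qed
      qed
      then show ?thesis using zd by blast
    qed
    then show ?thesis using K'0 by blast
  qed
qed

lemma span_sub:
  assumes "y \<in> lin_span (CF T f)" shows "y \<in> SP T f"
proof -
  obtain c F where y: "y = lincomb c F" "finite F" "F \<subseteq> CF T f"
    using assms unfolding lin_span_def by blast
  have "\<forall>s\<in>F. \<exists>r. lcf r T f = s" using y(3) unfolding CF_def by blast
  then obtain r where r: "\<And>s. s \<in> F \<Longrightarrow> lcf (r s) T f = s" by metis
  have "y = lcf (\<lambda>t. \<Sum>s\<in>F. c s * r s t) T f"
  proof (rule ext)
    fix i
    have "y i = (\<Sum>s\<in>F. c s * lcf (r s) T f i)" unfolding y(1) lincomb_def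
      by (rule sum.cong) (simp_all add: r)
    also have "\<dots> = (\<Sum>s\<in>F. \<Sum>t\<in>T. c s * (r s t * f t i))" by (simp add: lcf_def sum_distrib_left)
    also have "\<dots> = (\<Sum>t\<in>T. \<Sum>s\<in>F. c s * (r s t * f t i))" by (rule sum.swap)
    also have "\<dots> = lcf (\<lambda>t. \<Sum>s\<in>F. c s * r s t) T f i"
      by (simp add: lcf_def sum_distrib_right mult.assoc)
    finally show "y i = lcf (\<lambda>t. \<Sum>s\<in>F. c s * r s t) T f i" .
  qed
  then show ?thesis by (auto simp: SP_def)
qed

lemma relint_pos:
  assumes fin: "finite T" and fV: "\<forall>t\<in>T. inV m (f t)" and cpos: "\<forall>t\<in>T. 0 < c t"
  shows "lcf c T f \<in> relint (CF T f)"
proof -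
  let ?x = "lcf c T f"
  obtain K where K: "K \<ge> 0" "\<forall>z\<in>SP T f. \<exists>d. z = lcf d T f \<and> (\<forall>t\<in>T. \<bar>d t\<bar> \<le> K * nrm m z)"
    using bnd[OF fin fV] by blast
  define \<delta> where "\<delta> = Min (insert 1 (c ` T))"
  have \<delta>: "\<delta> > 0" "\<forall>t\<in>T. \<delta> \<le> c t"
    using fin cpos by (auto simp: \<delta>_def Min_gr_iff)
  define D where "D = K * (of_nat m + 1) + 1"
  have D: "D \<ge> 1" using K(1) by (simp add: D_def)
  define \<epsilon> where "\<epsilon> = \<delta> / D"
  have epos: "\<epsilon> > 0" using \<delta> D by (simp add: \<epsilon>_def)
  have epsD: "\<epsilon> * D = \<delta>" using D by (simp add: \<epsilon>_def)
  have "?x \<in> CF T f" using cpos by (auto simp: CF_def less_imp_le)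
  moreover have "\<forall>y\<in>lin_span (CF T f). (\<forall>i. \<bar>y i - ?x i\<bar> < \<epsilon>) \<longrightarrow> y \<in> CF T f"
  proof (intro ballI impI)
    fix y assume y: "y \<in> lin_span (CF T f)" "\<forall>i. \<bar>y i - ?x i\<bar> < \<epsilon>"
    have "y \<in> SP T f" using span_sub y(1) by blast
    then obtain e where e: "y = lcf e T f" by (auto simp: SP_def)
    define z where "z = (\<lambda>i. y i - ?x i)"
    have "z = lcf (\<lambda>t. e t - c t) T f" by (simp add: z_def e lcf_diff)
    then have "z \<in> SP T f" by (auto simp: SP_def)
    then obtain d where d: "z = lcf d T f" "\<forall>t\<in>T. \<bar>d t\<bar> \<le> K * nrm m z" using K by blast
    have "nrm m z \<le> (\<Sum>i<m. \<epsilon>)" unfolding nrm_def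
      by (intro sum_mono) (use y(2) in \<open>auto simp: z_def less_imp_le\<close>)
    then have nz: "nrm m z \<le> of_nat m * \<epsilon>" by simp
    have "K * nrm m z \<le> K * (of_nat m * \<epsilon>)" using nz K(1) by (rule mult_left_mono)
    also have "\<dots> < \<epsilon> * D" using epos K(1) by (simp add: D_def algebra_simps add_pos_nonneg)
    finally have Kd: "K * nrm m z < \<delta>" using epsD by simp
    have "y = lcf (\<lambda>t. c t + d t) T f" by (simp add: lcf_add d(1)[symmetric] z_def)
    moreover have "\<forall>t\<in>T. 0 \<le> c t + d t"
    proof
      fix t assume t: "t \<in> T"
      have "\<bar>d t\<bar> < \<delta>" using d(2) t Kd by fastforce
      then have "- \<delta> < d t" by (simp add: abs_less_iff)
      moreover have "\<delta> \<le> c t" using \<delta>(2) t by blast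
      ultimately show "0 \<le> c t + d t" by linarith
    qed
    ultimately show "y \<in> CF T f" by (auto simp: CF_def)
  qed
  ultimately show ?thesis unfolding relint_def using epos by blast
qed


lemma dual:
  assumes fin: "finite S" and SV: "\<forall>s\<in>S. inV n s" and li: "lin_indep S" and sS: "s \<in> S"
  shows "\<exists>a. dotp n a s = 1 \<and> (\<forall>s'\<in>S. s' \<noteq> s \<longrightarrow> dotp n a s' = 0)"
proof -
  have "s \<notin> SP (S - {s}) id"
  proof
    assume "s \<in> SP (S - {s}) id"
    then obtain d where d: "s = lcf d (S - {s}) id" by (auto simp: SP_def)
    define c where "c = d(s := -1)"
    have S_eq: "S = insert s (S - {s})" using sS by blast
    have "lcf c (S - {s}) id = lcf d (S - {s}) id" by (rule lcf_cong) (simp add: c_def)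
    then have "lincomb c S = (\<lambda>_. 0)"
      unfolding lincomb_lcf using fin
      apply (subst S_eq)
      apply (subst lcf_insert)
        apply (auto simp: c_def fun_eq_iff)
      by (metis d)
    then have "c s = 0" using li fin sS unfolding lin_indep_def by blast
    then show False by (simp add: c_def)
  qed
  then obtain a where "\<forall>t\<in>S - {s}. dotp n a (id t) = 0" "dotp n a (id s) = 1"
    using sep[of "S - {s}" n id] fin SV sS by auto
  then show ?thesis by auto
qed

lemma coef:
  assumes fin: "finite S" and A: "\<forall>s\<in>S. dotp n (A s) s = 1 \<and> (\<forall>s'\<in>S. s' \<noteq> s \<longrightarrow> dotp n (A s) s' = 0)"
    and sS: "s \<in> S"
  shows "dotp n (A s) (lcf c S id) = c s"
proof -
  have "dotp n (A s) (lcf c S id) = (\<Sum>t\<in>S. if t = s then c t else 0)"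
    unfolding dotp_lcf using A sS by (intro sum.cong) auto
  also have "\<dots> = c s" using fin sS by simp
  finally show ?thesis .
qed

lemma face_CF:
  assumes fin: "finite S" and fc: "is_face n \<gamma>0 (CF S id)"
  shows "\<exists>T\<subseteq>S. \<gamma>0 = CF T id"
proof -
  obtain u where u: "\<forall>x\<in>CF S id. 0 \<le> dotp n u x" "\<gamma>0 = {x\<in>CF S id. dotp n u x = 0}"
    using fc unfolding is_face_def by blast
  define T where "T = {s\<in>S. dotp n u s = 0}"
  have us: "0 \<le> dotp n u s" if "s \<in> S" for s
    using u(1) gen_in[OF fin that, of id] by simp
  have "\<gamma>0 = CF T id"
  proof
    show "\<gamma>0 \<subseteq> CF T id"
    proof
      fix x assume "x \<in> \<gamma>0"
      then obtain c where c: "x = lcf c S id" "\<forall>s\<in>S. 0 \<le> c s" "dotp n u x = 0"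
        using u(2) by (auto simp: CF_def)
      have "(\<Sum>s\<in>S. c s * dotp n u s) = 0" using c by (simp add: dotp_lcf)
      moreover have "\<forall>s\<in>S. 0 \<le> c s * dotp n u s" using c(2) us by simp
      ultimately have z: "\<forall>s\<in>S. c s * dotp n u s = 0"
        using sum_nonneg_eq_0_iff[OF fin, of "\<lambda>s. c s * dotp n u s"] by blast
      have "lcf c S id = lcf c T id"
      proof (rule lcf_ext0[OF fin])
        show "T \<subseteq> S" by (auto simp: T_def)
        fix t assume "t \<in> S - T"
        then show "c t = 0" using z by (auto simp: T_def)
      qed
      then show "x \<in> CF T id" using c(1,2) by (auto simp: CF_def T_def)
    qed
    show "CF T id \<subseteq> \<gamma>0"
    proof
      fix x assume "x \<in> CF T id"
      then obtain c where c: "x = lcf c T id" "\<forall>t\<in>T. 0 \<le> c t" by (auto simp: CF_def)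
      have "x \<in> CF S id" using CF_mono[OF fin, of T id] \<open>x \<in> CF T id\<close> by (auto simp: T_def)
      moreover have "dotp n u x = 0" using c by (simp add: dotp_lcf T_def)
      ultimately show "x \<in> \<gamma>0" using u(2) by blast
    qed
  qed
  moreover have "T \<subseteq> S" by (auto simp: T_def)
  ultimately show ?thesis by blast
qed

lemma face_of_sub:
  assumes fin: "finite S" and A: "\<forall>s\<in>S. dotp n (A s) s = 1 \<and> (\<forall>s'\<in>S. s' \<noteq> s \<longrightarrow> dotp n (A s) s' = 0)"
    and TS: "T \<subseteq> S"
  shows "is_face n (CF T id) (CF S id)"
proof -
  define u where "u = (\<lambda>j. if j < n then \<Sum>s\<in>S - T. A s j else 0)"
  have uV: "inV n u" by (simp add: inV_def u_def)
  have du: "dotp n u x = (\<Sum>s\<in>S - T. dotp n (A s) x)" for x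
    unfolding dotp_def u_def by (simp add: sum_distrib_right sum.swap[of _ "S - T"])
  have dc: "dotp n u (lcf c S id) = (\<Sum>s\<in>S - T. c s)" for c
    unfolding du using coef[OF fin A] by (intro sum.cong) auto
  have "CF T id = {x\<in>CF S id. dotp n u x = 0}"
  proof
    show "CF T id \<subseteq> {x\<in>CF S id. dotp n u x = 0}"
    proof
      fix x assume "x \<in> CF T id"
      then obtain c where c: "x = lcf c T id" "\<forall>t\<in>T. 0 \<le> c t" by (auto simp: CF_def)
      have x: "x = lcf (\<lambda>s. if s \<in> T then c s else 0) S id" using lcf_extend[OF fin TS] c by simp
      have "dotp n u x = 0" unfolding x dc by simp
      moreover have "x \<in> CF S id" using x c(2) by (auto simp: CF_def)
      ultimately show "x \<in> {x\<in>CF S id. dotp n u x = 0}" by blast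
    qed
    show "{x\<in>CF S id. dotp n u x = 0} \<subseteq> CF T id"
    proof
      fix x assume "x \<in> {x\<in>CF S id. dotp n u x = 0}"
      then obtain c where c: "x = lcf c S id" "\<forall>s\<in>S. 0 \<le> c s" "dotp n u x = 0" by (auto simp: CF_def)
      have "(\<Sum>s\<in>S - T. c s) = 0" using c dc by simp
      then have z: "\<forall>s\<in>S - T. c s = 0" using sum_nonneg_eq_0_iff[of "S - T" c] fin c(2) by auto
      have "x = lcf c T id" using c(1) lcf_ext0[OF fin TS] z by auto
      then show "x \<in> CF T id" using c(2) TS by (auto simp: CF_def)
    qed
  qed
  moreover have "\<forall>x\<in>CF S id. 0 \<le> dotp n u x"
  proof
    fix x assume "x \<in> CF S id"
    then obtain c where c: "x = lcf c S id" "\<forall>s\<in>S. 0 \<le> c s" by (auto simp: CF_def)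
    show "0 \<le> dotp n u x" unfolding c(1) dc using c(2) by (auto intro: sum_nonneg)
  qed
  ultimately show ?thesis unfolding is_face_def using uV by blast
qed

lemma strict_sub:
  assumes fin: "finite S" and A: "\<forall>s\<in>S. dotp n (A s) s = 1 \<and> (\<forall>s'\<in>S. s' \<noteq> s \<longrightarrow> dotp n (A s) s' = 0)"
    and TS: "T \<subseteq> S" and T'T: "T' \<subseteq> T" "T' \<noteq> T"
  shows "CF T' id \<subset> CF T id"
proof -
  have finT: "finite T" using fin TS finite_subset by blast
  obtain t where t: "t \<in> T" "t \<notin> T'" using T'T by blast
  have "t \<in> CF T id" using gen_in[OF finT t(1), of id] by simp
  moreover have "t \<notin> CF T' id"
  proof
    assume "t \<in> CF T' id"
    then obtain c where c: "t = lcf c T' id" by (auto simp: CF_def)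
    have "dotp n (A t) t = (\<Sum>s\<in>T'. c s * dotp n (A t) s)"
      by (subst (2) c) (simp add: dotp_lcf)
    also have "\<dots> = 0"
    proof (rule sum.neutral, rule ballI)
      fix s assume "s \<in> T'"
      then have "s \<noteq> t" "s \<in> S" using t TS T'T(1) by auto
      moreover have "t \<in> S" using t TS by auto
      ultimately show "c s * dotp n (A t) s = 0" using A by auto
    qed
    finally show False using A t TS by auto
  qed
  ultimately show ?thesis using CF_mono[OF finT T'T(1), of id] by blast
qed

lemma relint_lift:
  assumes fin: "finite T" and fV: "\<forall>t\<in>T. inV m (f t)" and sub: "\<tau> \<subseteq> CF T f"
    and x: "x \<in> relint \<tau>"
    and mn: "\<And>T'. T' \<subseteq> T \<Longrightarrow> T' \<noteq> T \<Longrightarrow> \<not> \<tau> \<subseteq> CF T' f"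
  shows "x \<in> relint (CF T f)"
proof -
  define P where "P = (\<lambda>c. (\<forall>s\<in>T. 0 \<le> c s) \<and> x = lcf c T f)"
  define T' where "T' = {t\<in>T. \<exists>c. P c \<and> 0 < c t}"
  have xt: "x \<in> \<tau>" using x by (auto simp: relint_def)
  obtain \<epsilon> where \<epsilon>: "\<epsilon> > 0" "\<forall>y\<in>lin_span \<tau>. (\<forall>i. \<bar>y i - x i\<bar> < \<epsilon>) \<longrightarrow> y \<in> \<tau>"
    using x by (auto simp: relint_def)
  have CV: "inV m z" if "z \<in> CF T f" for z using that fV inV_lcf by (auto simp: CF_def)
  have xV: "inV m x" using xt sub CV by blast
  have "\<tau> \<subseteq> CF T' f"
  proof
    fix y assume yt: "y \<in> \<tau>"
    have yV: "inV m y" using yt sub CV by blast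
    define M where "M = 1 + nrm m (\<lambda>i. x i - y i)"
    have Mpos: "M > 0" using nrm_nonneg[of m "\<lambda>i. x i - y i"] by (simp add: M_def)
    define \<delta> where "\<delta> = \<epsilon> / M"
    have dpos: "\<delta> > 0" using Mpos \<epsilon>(1) by (simp add: \<delta>_def)
    have dM: "\<delta> * M = \<epsilon>" using Mpos by (simp add: \<delta>_def)
    define p where "p = (\<lambda>i. (1 + \<delta>) * x i - \<delta> * y i)"
    have "p \<in> lin_span \<tau>"
    proof (cases "x = y")
      case True
      then have "p = lincomb (\<lambda>_. 1) {x}" by (auto simp: p_def lincomb_def algebra_simps)
      then show ?thesis using xt unfolding lin_span_def by blast
    next
      case False
      have "p = lincomb (\<lambda>v. if v = x then 1 + \<delta> else - \<delta>) {x, y}"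
        using False by (auto simp: p_def lincomb_def)
      then show ?thesis using xt yt unfolding lin_span_def by blast
    qed
    moreover have "\<forall>i. \<bar>p i - x i\<bar> < \<epsilon>"
    proof
      fix i
      have pe: "p i - x i = \<delta> * (x i - y i)" by (simp add: p_def algebra_simps)
      have "\<bar>x i - y i\<bar> < M"
      proof (cases "i < m")
        case True
        then have "\<bar>(\<lambda>i. x i - y i) i\<bar> \<le> nrm m (\<lambda>i. x i - y i)" by (rule le_nrm)
        then show ?thesis by (simp add: M_def)
      next
        case False
        then show ?thesis using xV yV Mpos by (simp add: inV_def)
      qed
      then have "\<delta> * \<bar>x i - y i\<bar> < \<delta> * M" using dpos by simp
      then show "\<bar>p i - x i\<bar> < \<epsilon>" using pe dM dpos by (simp add: abs_mult)
    qed
    ultimately have "p \<in> \<tau>" using \<epsilon>(2) by blast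
    then obtain e where e: "p = lcf e T f" "\<forall>t\<in>T. 0 \<le> e t" using sub by (auto simp: CF_def)
    obtain g where g: "y = lcf g T f" "\<forall>t\<in>T. 0 \<le> g t" using yt sub by (auto simp: CF_def)
    define c where "c = (\<lambda>t. inverse (1 + \<delta>) * (e t + \<delta> * g t))"
    have "lcf c T f = x"
    proof (rule ext)
      fix i
      have "lcf c T f i = inverse (1 + \<delta>) * (p i + \<delta> * y i)"
        unfolding c_def lcf_scale lcf_add lcf_scale e g by simp
      also have "\<dots> = x i" using dpos by (simp add: p_def field_simps)
      finally show "lcf c T f i = x i" .
    qed
    moreover have "\<forall>t\<in>T. 0 \<le> c t" using e(2) g(2) dpos by (simp add: c_def)
    ultimately have Pc: "P c" by (simp add: P_def)
    have "\<forall>t\<in>T - T'. g t = 0"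
    proof
      fix t assume t: "t \<in> T - T'"
      then have "\<not> 0 < c t" using Pc by (auto simp: T'_def)
      then have "e t + \<delta> * g t \<le> 0" using dpos
        by (simp add: c_def zero_less_mult_iff)
      moreover have t1: "t \<in> T" using t by blast
      moreover have "0 \<le> e t" "0 \<le> g t" using e(2) g(2) t1 by auto
      ultimately have "\<delta> * g t \<le> 0" by linarith
      then have "g t \<le> 0" using dpos by (simp add: mult_le_0_iff)
      then show "g t = 0" using \<open>0 \<le> g t\<close> by linarith
    qed
    then have "y = lcf g T' f" using g(1) lcf_ext0[OF fin, of T' g f] by (auto simp: T'_def)
    then show "y \<in> CF T' f" using g(2) by (auto simp: CF_def T'_def)
  qed
  then have TT: "T' = T" using mn[of T'] by (auto simp: T'_def)
  show ?thesis
  proof (cases "T = {}")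
    case True
    have "x \<in> CF T f" using xt sub by blast
    then have "x = lcf (\<lambda>_. 1) T f" using True by (auto simp: CF_def lcf_empty)
    then show ?thesis using relint_pos[of T m f "\<lambda>_. 1"] fin fV by simp
  next
    case False
    have "\<forall>t\<in>T. \<exists>c. P c \<and> 0 < c t" using TT by (auto simp: T'_def)
    then obtain C where C: "\<And>t. t \<in> T \<Longrightarrow> P (C t) \<and> 0 < C t t" by metis
    define k where "k = (of_nat (card T) :: rat)"
    have kpos: "k > 0" using False fin by (simp add: k_def card_gt_0_iff)
    define c where "c = (\<lambda>s. inverse k * (\<Sum>t\<in>T. C t s))"
    have "lcf c T f = x"
    proof (rule ext)
      fix i
      have "lcf c T f i = inverse k * (\<Sum>t\<in>T. lcf (C t) T f i)"
        unfolding c_def lcf_scale lcf_sum by simp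
      also have "\<dots> = inverse k * (\<Sum>t\<in>T. x i)"
        using C by (simp add: P_def)
      also have "\<dots> = x i" using kpos by (simp add: k_def)
      finally show "lcf c T f i = x i" .
    qed
    moreover have "\<forall>s\<in>T. 0 < c s"
    proof
      fix s assume s: "s \<in> T"
      have "C s s \<le> (\<Sum>t\<in>T. C t s)"
        using s fin C by (intro member_le_sum) (auto simp: P_def)
      then have "0 < (\<Sum>t\<in>T. C t s)" using C s by (meson less_le_trans)
      then show "0 < c s" using kpos by (simp add: c_def)
    qed
    ultimately show ?thesis using relint_pos[of T m f c] fin fV by simp
  qed
qed


theorem lemma2p5:
  fixes m n :: nat and Q :: "nat \<Rightarrow> nat \<Rightarrow> int" and \<gamma> :: "qvec set"
    and \<Theta> :: "qvec set set" and \<gamma>1 \<gamma>2 :: "qvec set"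
  assumes "projected_cone m n Q \<gamma>"
    and "is_bunch m n Q \<gamma> \<Theta>"
    and "\<gamma>1 \<in> cov m n Q \<gamma> \<Theta>"
    and "\<gamma>2 \<in> cov m n Q \<gamma> \<Theta>"
  shows "relint (qmap m n Q ` \<gamma>1) \<inter> relint (qmap m n Q ` \<gamma>2) \<noteq> {}"
proof -
  obtain S where S: "finite S" "\<forall>s\<in>S. inV n s" "lin_indep S" "\<gamma> = cone_gen S"
    using assms(1) unfolding projected_cone_def simplicial_full_cone_def by blast
  have gS: "\<gamma> = CF S id" using S cone_gen_CF by simp
  have "\<forall>s\<in>S. \<exists>a. dotp n a s = 1 \<and> (\<forall>s'\<in>S. s' \<noteq> s \<longrightarrow> dotp n a s' = 0)"
    using dual[OF S(1) S(2) S(3)] by blast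
  then obtain A where A: "\<forall>s\<in>S. dotp n (A s) s = 1 \<and> (\<forall>s'\<in>S. s' \<noteq> s \<longrightarrow> dotp n (A s) s' = 0)"
    by metis
  let ?q = "qmap m n Q"
  have qV: "\<forall>t\<in>T. inV m (?q t)" for T :: "qvec set" by (simp add: inV_qmap)
  have nonempty: "relint \<tau> \<noteq> {}" if pf: "proj_face m n Q \<gamma> \<tau>" for \<tau>
  proof -
    obtain \<gamma>0 where g0: "is_face n \<gamma>0 \<gamma>" "\<tau> = ?q ` \<gamma>0" using pf unfolding proj_face_def by blast
    obtain T where T: "T \<subseteq> S" "\<gamma>0 = CF T id" using face_CF[OF S(1)] g0(1) gS by metis
    have fT: "finite T" using T(1) S(1) finite_subset by blast
    have "\<tau> = CF T ?q" using g0(2) T(2) qmap_CF by simp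
    then show ?thesis using relint_pos[OF fT qV, of "\<lambda>_. 1"] by auto
  qed
  have key: "\<exists>\<tau>\<in>\<Theta>. \<forall>x\<in>relint \<tau>. x \<in> relint (?q ` \<gamma>')" if g: "\<gamma>' \<in> cov m n Q \<gamma> \<Theta>" for \<gamma>'
  proof -
    from g have face: "is_face n \<gamma>' \<gamma>" and ex: "\<exists>\<tau>\<in>\<Theta>. \<tau> \<subseteq> ?q ` \<gamma>'"
      and mini: "\<forall>\<gamma>1. is_face n \<gamma>1 \<gamma> \<longrightarrow> \<gamma>1 \<subset> \<gamma>' \<longrightarrow> \<not> (\<exists>\<tau>\<in>\<Theta>. \<tau> \<subseteq> ?q ` \<gamma>1)"
      unfolding cov_def by auto
    obtain T where T: "T \<subseteq> S" "\<gamma>' = CF T id" using face_CF[OF S(1)] face gS by metis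
    obtain \<tau> where tau: "\<tau> \<in> \<Theta>" "\<tau> \<subseteq> ?q ` \<gamma>'" using ex by blast
    have fT: "finite T" using T(1) S(1) finite_subset by blast
    have "\<forall>x\<in>relint \<tau>. x \<in> relint (CF T ?q)"
    proof
      fix x assume x: "x \<in> relint \<tau>"
      show "x \<in> relint (CF T ?q)"
      proof (rule relint_lift[OF fT qV _ x])
        show "\<tau> \<subseteq> CF T ?q" using tau T qmap_CF by simp
        fix T' assume T': "T' \<subseteq> T" "T' \<noteq> T"
        have "is_face n (CF T' id) \<gamma>" using face_of_sub[OF S(1) A] T' T(1) gS by auto
        moreover have "CF T' id \<subset> \<gamma>'" using strict_sub[OF S(1) A T(1) T'] T(2) by simp
        ultimately have "\<not> (\<exists>\<tau>\<in>\<Theta>. \<tau> \<subseteq> ?q ` CF T' id)" using mini by blast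
        then show "\<not> \<tau> \<subseteq> CF T' ?q" using tau(1) qmap_CF by metis
      qed
    qed
    then show ?thesis using tau T qmap_CF by metis
  qed
  obtain \<tau>1 where t1: "\<tau>1 \<in> \<Theta>" "\<forall>x\<in>relint \<tau>1. x \<in> relint (?q ` \<gamma>1)" using key assms(3) by blast
  obtain \<tau>2 where t2: "\<tau>2 \<in> \<Theta>" "\<forall>x\<in>relint \<tau>2. x \<in> relint (?q ` \<gamma>2)" using key assms(4) by blast
  have pf2: "proj_face m n Q \<gamma> \<tau>2" using assms(2) t2(1) by (auto simp: is_bunch_def)
  have "relint \<tau>1 \<inter> relint \<tau>2 \<noteq> {}"
  proof (cases "\<tau>1 = \<tau>2")
    case True
    then show ?thesis using nonempty[OF pf2] by simp
  next
    case False
    have "\<forall>\<tau>\<in>\<Theta>. \<tau> \<noteq> \<tau>2 \<longrightarrow> relint \<tau>2 \<inter> relint \<tau> \<noteq> {} \<and> relint \<tau>2 \<inter> relint \<tau> \<noteq> relint \<tau>"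
      using assms(2) t2(1) pf2 unfolding is_bunch_def by blast
    then show ?thesis using t1(1) False by blast
  qed
  then show ?thesis using t1(2) t2(2) by blast
qed

end
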